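(* Let $n\ge 2$ and let $\Delta$ be a finite subset of $\mathbb{A}^n_{\mathbb{C}}$. Then $\mathrm{Stab}(\Delta)=\{f\in\mathrm{Aut}(\mathbb{A}^n_{\mathbb{C}}): f(\Delta)=\Delta\}$ is a maximal subgroup of $\mathrm{Aut}(\mathbb{A}^n_{\mathbb{C}})$, and it is closed in $\mathrm{Aut}(\mathbb{A}^n_{\mathbb{C}})$.
   Context: $\mathrm{Aut}(\mathbb{A}^n_{\mathbb{C}})$ is the group of polynomial automorphisms of $\mathbb{A}^n_{\mathbb{C}}$, an ind-group for the filtration by degree; a subset is closed iff its intersection with the variety of automorphisms of degree $\le d$ is Zariski closed for every $d$. *)

theory Defs
  imports Complex_Main "HOL-Library.Poly_Mapping" "HOL-Algebra.Group"
begin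

text \<open>Multivariate polynomials over C in variables of type 'v: finitely supported maps
  from monomials (exponent vectors 'v =>0 nat) to coefficients.\<close>
type_synonym 'v cpoly = "('v \<Rightarrow>\<^sub>0 nat) \<Rightarrow>\<^sub>0 complex"

definition mon_deg :: "('v \<Rightarrow>\<^sub>0 nat) \<Rightarrow> nat" where
  "mon_deg m = (\<Sum>v\<in>Poly_Mapping.keys m. Poly_Mapping.lookup m v)"

definition tdeg :: "'v cpoly \<Rightarrow> nat" where
  "tdeg p = Max (insert 0 (mon_deg ` Poly_Mapping.keys p))"

definition mpeval :: "'v cpoly \<Rightarrow> ('v \<Rightarrow> complex) \<Rightarrow> complex" where
  "mpeval p x = (\<Sum>m\<in>Poly_Mapping.keys p.
      Poly_Mapping.lookup p m * (\<Prod>v\<in>Poly_Mapping.keys m. x v ^ Poly_Mapping.lookup m v))"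

text \<open>Points of A^n are functions 'n => complex ('n a finite index type with n = CARD('n)).
  A polynomial map is given by n component polynomials.\<close>
definition eval_map :: "('n \<Rightarrow> 'n cpoly) \<Rightarrow> ('n \<Rightarrow> complex) \<Rightarrow> ('n \<Rightarrow> complex)" where
  "eval_map F x = (\<lambda>i. mpeval (F i) x)"

definition is_poly_map :: "(('n \<Rightarrow> complex) \<Rightarrow> ('n \<Rightarrow> complex)) \<Rightarrow> bool" where
  "is_poly_map f \<longleftrightarrow> (\<exists>F. f = eval_map F)"

definition Aut :: "(('n::finite \<Rightarrow> complex) \<Rightarrow> ('n \<Rightarrow> complex)) set" where
  "Aut = {f. bij f \<and> is_poly_map f \<and> is_poly_map (inv_into UNIV f)}"

definition AutG :: "(('n::finite \<Rightarrow> complex) \<Rightarrow> ('n \<Rightarrow> complex)) monoid" where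
  "AutG = \<lparr>carrier = Aut, monoid.mult = (\<circ>), monoid.one = id\<rparr>"

definition Aut_le :: "nat \<Rightarrow> (('n::finite \<Rightarrow> complex) \<Rightarrow> ('n \<Rightarrow> complex)) set" where
  "Aut_le d = {f \<in> Aut. \<exists>F. f = eval_map F \<and> (\<forall>i. tdeg (F i) \<le> d)}"

text \<open>Ind-topology: S is closed iff for each d, S \<inter> Aut_le d is the trace on Aut_le d of a
  Zariski closed subset of the affine space of coefficient tuples
  (coordinates indexed by (i, m): coefficient of monomial m in component i).\<close>
definition ind_closed :: "(('n::finite \<Rightarrow> complex) \<Rightarrow> ('n \<Rightarrow> complex)) set \<Rightarrow> bool" where
  "ind_closed S \<longleftrightarrow> (\<forall>d. \<exists>Q :: ('n \<times> ('n \<Rightarrow>\<^sub>0 nat)) cpoly set.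
     S \<inter> Aut_le d = {f \<in> Aut_le d. \<exists>F. f = eval_map F \<and> (\<forall>i. tdeg (F i) \<le> d) \<and>
        (\<forall>q\<in>Q. mpeval q (\<lambda>(i, m). Poly_Mapping.lookup (F i) m) = 0)})"

definition Stab :: "('n::finite \<Rightarrow> complex) set \<Rightarrow> (('n \<Rightarrow> complex) \<Rightarrow> ('n \<Rightarrow> complex)) set" where
  "Stab \<Delta> = {f \<in> Aut. f ` \<Delta> = \<Delta>}"

definition maximal_subgroup :: "'a set \<Rightarrow> ('a, 'b) monoid_scheme \<Rightarrow> bool" where
  "maximal_subgroup H G \<longleftrightarrow> subgroup H G \<and> H \<noteq> carrier G \<and>
     (\<forall>K. subgroup K G \<and> H \<subseteq> K \<longrightarrow> K = H \<or> K = carrier G)"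

end

theory Submission
  imports Defs
begin


definition mmono :: "('v \<Rightarrow>\<^sub>0 nat) \<Rightarrow> ('v \<Rightarrow> complex) \<Rightarrow> complex" where
  "mmono m x = (\<Prod>v\<in>Poly_Mapping.keys m. x v ^ Poly_Mapping.lookup m v)"

lemma mono_superset:
  assumes "finite S" "Poly_Mapping.keys m \<subseteq> S"
  shows "mmono m x = (\<Prod>v\<in>S. x v ^ Poly_Mapping.lookup m v)"
  unfolding mmono_def
  by (rule prod.mono_neutral_left) (use assms in \<open>auto simp: in_keys_iff\<close>)

lemma mono_add: "mmono (m + k) x = mmono m x * mmono k x"
proof -
  let ?S = "Poly_Mapping.keys m \<union> Poly_Mapping.keys k"
  have "mmono (m + k) x = (\<Prod>v\<in>?S. x v ^ Poly_Mapping.lookup (m+k) v)"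
    by (rule mono_superset) (use keys_add[of m k] in auto)
  also have "\<dots> = (\<Prod>v\<in>?S. x v ^ Poly_Mapping.lookup m v) * (\<Prod>v\<in>?S. x v ^ Poly_Mapping.lookup k v)"
    by (simp add: lookup_add power_add prod.distrib)
  also have "\<dots> = mmono m x * mmono k x"
    by (simp add: mono_superset[symmetric])
  finally show ?thesis .
qed

lemma mono_zero: "mmono 0 x = 1" by (simp add: mmono_def)

lemma mono_single: "mmono (Poly_Mapping.single v (Suc 0)) x = x v"
  by (simp add: mmono_def)

lemma mpeval_mono: "mpeval p x = (\<Sum>m\<in>Poly_Mapping.keys p. Poly_Mapping.lookup p m * mmono m x)"
  by (simp add: mpeval_def mmono_def)

definition is_mp :: "(('v \<Rightarrow> complex) \<Rightarrow> complex) \<Rightarrow> bool" where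
  "is_mp g \<longleftrightarrow> (\<exists>p. g = mpeval p)"

lemma is_mp_lc:
  assumes "finite S"
  shows "is_mp (\<lambda>x. \<Sum>m\<in>S. c m * mmono m x)"
proof -
  define p where "p = Abs_poly_mapping (\<lambda>m. if m \<in> S then c m else 0)"
  have fin: "finite {m. (if m \<in> S then c m else 0) \<noteq> 0}"
    by (rule finite_subset[OF _ assms]) auto
  have lk: "Poly_Mapping.lookup p = (\<lambda>m. if m \<in> S then c m else 0)"
    unfolding p_def by (rule lookup_Abs_poly_mapping[OF fin])
  have ks: "Poly_Mapping.keys p \<subseteq> S"
  proof
    fix m assume "m \<in> Poly_Mapping.keys p"
    then have "Poly_Mapping.lookup p m \<noteq> 0" by (simp add: in_keys_iff)
    then show "m \<in> S" unfolding lk by (cases "m \<in> S") auto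
  qed
  have "mpeval p x = (\<Sum>m\<in>S. c m * mmono m x)" for x
    unfolding mpeval_mono
  proof (rule sum.mono_neutral_cong_left[OF assms ks])
    show "\<forall>i\<in>S - Poly_Mapping.keys p. c i * mmono i x = 0"
    proof
      fix i assume "i \<in> S - Poly_Mapping.keys p"
      then have "Poly_Mapping.lookup p i = 0" "i \<in> S" by (auto simp: in_keys_iff)
      then show "c i * mmono i x = 0" by (simp add: lk)
    qed
    show "\<And>m. m \<in> Poly_Mapping.keys p \<Longrightarrow> Poly_Mapping.lookup p m * mmono m x = c m * mmono m x"
      using ks by (auto simp: lk)
  qed
  then have "(\<lambda>x. \<Sum>m\<in>S. c m * mmono m x) = mpeval p" by (simp add: fun_eq_iff)
  then show ?thesis unfolding is_mp_def by blast
qed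

lemma is_mp_E:
  assumes "is_mp g"
  obtains S c where "finite S" "g = (\<lambda>x. \<Sum>m\<in>S. c m * mmono m x)"
proof -
  obtain p where "g = mpeval p" using assms unfolding is_mp_def by blast
  then have "g = (\<lambda>x. \<Sum>m\<in>Poly_Mapping.keys p. Poly_Mapping.lookup p m * mmono m x)"
    by (simp add: fun_eq_iff mpeval_mono)
  then show ?thesis using that[of "Poly_Mapping.keys p" "Poly_Mapping.lookup p"] by simp
qed

lemma is_mp_const: "is_mp (\<lambda>x. a)"
  using is_mp_lc[of "{0}" "\<lambda>_. a"] by (simp add: mono_zero)

lemma is_mp_var: "is_mp (\<lambda>x. x v)"
  using is_mp_lc[of "{Poly_Mapping.single v (Suc 0)}" "\<lambda>_. 1"] by (simp add: mono_single del: One_nat_def)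

lemma is_mp_add:
  assumes "is_mp f" "is_mp g" shows "is_mp (\<lambda>x. f x + g x)"
proof -
  obtain S c where S: "finite S" "f = (\<lambda>x. \<Sum>m\<in>S. c m * mmono m x)" using assms(1) by (rule is_mp_E)
  obtain T d where T: "finite T" "g = (\<lambda>x. \<Sum>m\<in>T. d m * mmono m x)" using assms(2) by (rule is_mp_E)
  define e where "e m = (if m \<in> S then c m else 0) + (if m \<in> T then d m else 0)" for m
  have "\<And>x. f x + g x = (\<Sum>m\<in>S \<union> T. e m * mmono m x)"
  proof -
    fix x
    have "f x = (\<Sum>m\<in>S \<union> T. (if m \<in> S then c m else 0) * mmono m x)"
      unfolding S(2) by (rule sum.mono_neutral_cong_left) (use S T in auto)
    moreover have "g x = (\<Sum>m\<in>S \<union> T. (if m \<in> T then d m else 0) * mmono m x)"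
      unfolding T(2) by (rule sum.mono_neutral_cong_left) (use S T in auto)
    ultimately show "f x + g x = (\<Sum>m\<in>S \<union> T. e m * mmono m x)"
      by (simp add: e_def sum.distrib[symmetric] distrib_right)
  qed
  then show ?thesis using is_mp_lc[of "S \<union> T" e] S T by simp
qed

lemma is_mp_mult:
  assumes "is_mp f" "is_mp g" shows "is_mp (\<lambda>x. f x * g x)"
proof -
  obtain S c where S: "finite S" "f = (\<lambda>x. \<Sum>m\<in>S. c m * mmono m x)" using assms(1) by (rule is_mp_E)
  obtain T d where T: "finite T" "g = (\<lambda>x. \<Sum>m\<in>T. d m * mmono m x)" using assms(2) by (rule is_mp_E)
  define h where "h = (\<lambda>(a::'a \<Rightarrow>\<^sub>0 nat, b). a + b)"
  define e where "e u = (\<Sum>q\<in>{q\<in>S \<times> T. h q = u}. c (fst q) * d (snd q))" for u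
  have fin: "finite (S \<times> T)" using S T by simp
  have "\<And>x. f x * g x = (\<Sum>u\<in>h ` (S \<times> T). e u * mmono u x)"
  proof -
    fix x
    have "f x * g x = (\<Sum>q\<in>S \<times> T. c (fst q) * d (snd q) * mmono (h q) x)"
      unfolding S(2) T(2) sum_product sum.cartesian_product
      by (rule sum.cong) (auto simp: h_def mono_add)
    also have "\<dots> = (\<Sum>u\<in>h ` (S \<times> T). \<Sum>q\<in>{q\<in>S \<times> T. h q = u}. c (fst q) * d (snd q) * mmono (h q) x)"
      by (rule sum.image_gen[OF fin])
    also have "\<dots> = (\<Sum>u\<in>h ` (S \<times> T). e u * mmono u x)"
      unfolding e_def sum_distrib_right by (intro sum.cong refl) auto
    finally show "f x * g x = (\<Sum>u\<in>h ` (S \<times> T). e u * mmono u x)" .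
  qed
  then show ?thesis using is_mp_lc[of "h ` (S \<times> T)" e] fin by simp
qed

inductive pf :: "(('v \<Rightarrow> complex) \<Rightarrow> complex) \<Rightarrow> bool" where
  pf_const: "pf (\<lambda>x. a)"
| pf_var: "pf (\<lambda>x. x v)"
| pf_add: "pf f \<Longrightarrow> pf g \<Longrightarrow> pf (\<lambda>x. f x + g x)"
| pf_mult: "pf f \<Longrightarrow> pf g \<Longrightarrow> pf (\<lambda>x. f x * g x)"

lemma pf_is_mp: "pf g \<Longrightarrow> is_mp g"
proof (induction rule: pf.induct)
  case (pf_const a) show ?case by (rule is_mp_const)
next
  case (pf_var v) show ?case by (rule is_mp_var)
next
  case (pf_add f g) show ?case by (rule is_mp_add[OF pf_add.IH])
next
  case (pf_mult f g) show ?case by (rule is_mp_mult[OF pf_mult.IH])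
qed

lemma pf_sum: "finite S \<Longrightarrow> (\<And>s. s \<in> S \<Longrightarrow> pf (f s)) \<Longrightarrow> pf (\<lambda>x. \<Sum>s\<in>S. f s x)"
proof (induction S rule: finite_induct)
  case empty show ?case using pf_const[of 0] by simp
next
  case (insert a S)
  have "pf (\<lambda>x. f a x + (\<Sum>s\<in>S. f s x))" by (rule pf_add) (use insert in auto)
  then show ?case using insert by simp
qed

lemma pf_prod: "finite S \<Longrightarrow> (\<And>s. s \<in> S \<Longrightarrow> pf (f s)) \<Longrightarrow> pf (\<lambda>x. \<Prod>s\<in>S. f s x)"
proof (induction S rule: finite_induct)
  case empty show ?case using pf_const[of 1] by simp
next
  case (insert a S)
  have "pf (\<lambda>x. f a x * (\<Prod>s\<in>S. f s x))" by (rule pf_mult) (use insert in auto)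
  then show ?case using insert by simp
qed

lemma pf_power: "pf f \<Longrightarrow> pf (\<lambda>x. f x ^ n)"
proof (induction n)
  case 0 show ?case using pf_const[of 1] by simp
next
  case (Suc n)
  have "pf (\<lambda>x. f x * f x ^ n)" by (rule pf_mult) (use Suc in auto)
  then show ?case by simp
qed

lemma pf_diff: "pf f \<Longrightarrow> pf g \<Longrightarrow> pf (\<lambda>x. f x - g x)"
proof -
  assume "pf f" "pf g"
  then have "pf (\<lambda>x. f x + (-1) * g x)" by (intro pf.intros)
  then show ?thesis by simp
qed

lemma mpeval_pf: "pf (mpeval p)"
  unfolding mpeval_mono[abs_def] mmono_def
  apply (rule pf_sum, simp)
  apply (rule pf_mult, rule pf_const)
  apply (rule pf_prod, simp)
  apply (rule pf_power, rule pf_var)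
  done

lemma is_mp_pf: "is_mp g \<Longrightarrow> pf g"
  unfolding is_mp_def using mpeval_pf by auto

lemma pf_subst:
  "pf g \<Longrightarrow> (\<And>i. pf (h i)) \<Longrightarrow> pf (\<lambda>x. g (\<lambda>i. h i x))"
proof (induction rule: pf.induct)
  case (pf_const a) show ?case by (rule pf.pf_const)
next
  case (pf_var v) show ?case using pf_var by simp
next
  case (pf_add f g) show ?case by (rule pf.pf_add[OF pf_add.IH(1)[OF pf_add.prems] pf_add.IH(2)[OF pf_add.prems]])
next
  case (pf_mult f g) show ?case by (rule pf.pf_mult[OF pf_mult.IH(1)[OF pf_mult.prems] pf_mult.IH(2)[OF pf_mult.prems]])
qed



abbreviation finv :: "('a \<Rightarrow> 'b) \<Rightarrow> 'b \<Rightarrow> 'a" where "finv f \<equiv> inv_into UNIV f"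

lemma is_poly_map_iff: "is_poly_map f \<longleftrightarrow> (\<forall>i. pf (\<lambda>x. f x i))"
proof
  assume "is_poly_map f"
  then obtain F where F: "f = eval_map F" unfolding is_poly_map_def by blast
  show "\<forall>i. pf (\<lambda>x. f x i)"
  proof
    fix i
    have "(\<lambda>x. f x i) = mpeval (F i)" by (simp add: F eval_map_def fun_eq_iff)
    then show "pf (\<lambda>x. f x i)" using mpeval_pf by simp
  qed
next
  assume a: "\<forall>i. pf (\<lambda>x. f x i)"
  have "\<forall>i. \<exists>p. (\<lambda>x. f x i) = mpeval p"
  proof
    fix i show "\<exists>p. (\<lambda>x. f x i) = mpeval p" using pf_is_mp[of "\<lambda>x. f x i"] a unfolding is_mp_def by blast
  qed
  then obtain F where F: "\<And>i. (\<lambda>x. f x i) = mpeval (F i)" by metis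
  have "f = eval_map F"
  proof (rule ext)+
    fix x i show "f x i = eval_map F x i" using fun_cong[OF F[of i], of x] by (simp add: eval_map_def)
  qed
  then show "is_poly_map f" unfolding is_poly_map_def by blast
qed

lemma poly_map_comp:
  assumes "is_poly_map f" "is_poly_map g" shows "is_poly_map (f \<circ> g)"
  unfolding is_poly_map_iff
proof
  fix i
  have f: "pf (\<lambda>y. f y i)" and g: "\<And>j. pf (\<lambda>x. g x j)" using assms by (auto simp: is_poly_map_iff)
  have "pf (\<lambda>x. (\<lambda>y. f y i) (\<lambda>j. (\<lambda>x. g x j) x))" by (rule pf_subst[OF f g])
  then show "pf (\<lambda>x. (f \<circ> g) x i)" by simp
qed

lemma poly_map_id: "is_poly_map id"
  unfolding is_poly_map_iff by (simp add: pf_var)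

lemma Aut_I:
  assumes "is_poly_map f" "is_poly_map g" "f \<circ> g = id" "g \<circ> f = id"
  shows "f \<in> Aut" "finv f = g"
proof -
  have b: "bij f" by (rule o_bij[OF assms(4) assms(3)])
  have i: "finv f = g" by (rule inv_unique_comp[OF assms(3) assms(4)])
  show "f \<in> Aut" unfolding Aut_def using b i assms by simp
  show "finv f = g" by (rule i)
qed

lemma Aut_D:
  assumes "f \<in> Aut"
  shows "bij f" "is_poly_map f" "is_poly_map (finv f)" "finv f \<in> Aut" "f \<circ> finv f = id" "finv f \<circ> f = id"
proof -
  show b: "bij f" and p: "is_poly_map f" and q: "is_poly_map (finv f)" using assms by (auto simp: Aut_def)
  show c1: "f \<circ> finv f = id" using b by (simp add: bij_is_surj surj_iff[symmetric])
  show c2: "finv f \<circ> f = id" using b by (simp add: bij_is_inj)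
  show "finv f \<in> Aut" by (rule Aut_I(1)[OF q p c2 c1])
qed

lemma Aut_comp:
  assumes "f \<in> Aut" "g \<in> Aut" shows "f \<circ> g \<in> Aut"
proof (rule Aut_I(1))
  show "is_poly_map (f \<circ> g)" using assms by (intro poly_map_comp) (auto dest: Aut_D)
  show "is_poly_map (finv g \<circ> finv f)" using assms by (intro poly_map_comp) (auto dest: Aut_D)
  have a: "f \<circ> finv f = id" "finv f \<circ> f = id" "g \<circ> finv g = id" "finv g \<circ> g = id"
    using assms by (auto dest: Aut_D)
  show "(f \<circ> g) \<circ> (finv g \<circ> finv f) = id"
    by (metis a comp_assoc comp_id)
  show "(finv g \<circ> finv f) \<circ> (f \<circ> g) = id"
    by (metis a comp_assoc comp_id)
qed

lemma id_Aut: "id \<in> Aut"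
  using Aut_I(1)[OF poly_map_id poly_map_id] by simp

lemma group_AutG: "group (AutG :: (('n::finite \<Rightarrow> complex) \<Rightarrow> ('n \<Rightarrow> complex)) monoid)"
proof (rule groupI)
  show "\<And>x y. x \<in> carrier (AutG::(('n \<Rightarrow> complex) \<Rightarrow> ('n \<Rightarrow> complex)) monoid) \<Longrightarrow> y \<in> carrier AutG \<Longrightarrow> x \<otimes>\<^bsub>AutG\<^esub> y \<in> carrier AutG"
    by (simp add: AutG_def Aut_comp)
  show "\<one>\<^bsub>AutG\<^esub> \<in> carrier (AutG::(('n \<Rightarrow> complex) \<Rightarrow> ('n \<Rightarrow> complex)) monoid)"
    by (simp add: AutG_def id_Aut)
  show "\<And>x y z. x \<in> carrier (AutG::(('n \<Rightarrow> complex) \<Rightarrow> ('n \<Rightarrow> complex)) monoid) \<Longrightarrow> y \<in> carrier AutG \<Longrightarrow> z \<in> carrier AutG \<Longrightarrow>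
    x \<otimes>\<^bsub>AutG\<^esub> y \<otimes>\<^bsub>AutG\<^esub> z = x \<otimes>\<^bsub>AutG\<^esub> (y \<otimes>\<^bsub>AutG\<^esub> z)"
    by (simp add: AutG_def comp_assoc)
  show "\<And>x. x \<in> carrier (AutG::(('n \<Rightarrow> complex) \<Rightarrow> ('n \<Rightarrow> complex)) monoid) \<Longrightarrow> \<one>\<^bsub>AutG\<^esub> \<otimes>\<^bsub>AutG\<^esub> x = x"
    by (simp add: AutG_def)
  show "\<And>x. x \<in> carrier (AutG::(('n \<Rightarrow> complex) \<Rightarrow> ('n \<Rightarrow> complex)) monoid) \<Longrightarrow> \<exists>y\<in>carrier AutG. y \<otimes>\<^bsub>AutG\<^esub> x = \<one>\<^bsub>AutG\<^esub>"
  proof -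
    fix x :: "('n \<Rightarrow> complex) \<Rightarrow> ('n \<Rightarrow> complex)"
    assume "x \<in> carrier AutG"
    then have "x \<in> Aut" by (simp add: AutG_def)
    then show "\<exists>y\<in>carrier AutG. y \<otimes>\<^bsub>AutG\<^esub> x = \<one>\<^bsub>AutG\<^esub>"
      by (intro bexI[of _ "finv x"]) (auto simp: AutG_def dest: Aut_D)
  qed
qed

lemma AutG_inv:
  assumes "f \<in> Aut"
  shows "inv\<^bsub>(AutG :: (('n::finite \<Rightarrow> complex) \<Rightarrow> ('n \<Rightarrow> complex)) monoid)\<^esub> f = finv f"
  by (rule group.inv_equality[OF group_AutG]) (use assms in \<open>auto simp: AutG_def dest: Aut_D\<close>)

lemma Stab_subgroup:
  "subgroup (Stab \<Delta>) (AutG :: (('n::finite \<Rightarrow> complex) \<Rightarrow> ('n \<Rightarrow> complex)) monoid)"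
proof
  show "Stab \<Delta> \<subseteq> carrier (AutG :: (('n::finite \<Rightarrow> complex) \<Rightarrow> ('n \<Rightarrow> complex)) monoid)"
    by (auto simp: Stab_def AutG_def)
  show "\<And>x y. x \<in> Stab \<Delta> \<Longrightarrow> y \<in> Stab \<Delta> \<Longrightarrow> x \<otimes>\<^bsub>(AutG :: (('n::finite \<Rightarrow> complex) \<Rightarrow> ('n \<Rightarrow> complex)) monoid)\<^esub> y \<in> Stab \<Delta>"
    proof -
    fix x y :: "('n \<Rightarrow> complex) \<Rightarrow> ('n \<Rightarrow> complex)"
    assume "x \<in> Stab \<Delta>" "y \<in> Stab \<Delta>"
    then have a: "x \<in> Aut" "x ` \<Delta> = \<Delta>" "y \<in> Aut" "y ` \<Delta> = \<Delta>" by (auto simp: Stab_def)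
    have "(x \<circ> y) ` \<Delta> = \<Delta>" unfolding image_comp[symmetric] using a by simp
    then show "x \<otimes>\<^bsub>AutG\<^esub> y \<in> Stab \<Delta>" using a by (simp add: Stab_def AutG_def Aut_comp)
  qed
  show "\<one>\<^bsub>(AutG :: (('n::finite \<Rightarrow> complex) \<Rightarrow> ('n \<Rightarrow> complex)) monoid)\<^esub> \<in> Stab \<Delta>"
    by (auto simp: Stab_def AutG_def id_Aut)
  show "\<And>x. x \<in> Stab \<Delta> \<Longrightarrow> inv\<^bsub>(AutG :: (('n::finite \<Rightarrow> complex) \<Rightarrow> ('n \<Rightarrow> complex)) monoid)\<^esub> x \<in> Stab \<Delta>"
  proof -
    fix x :: "('n \<Rightarrow> complex) \<Rightarrow> ('n \<Rightarrow> complex)"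
    assume a: "x \<in> Stab \<Delta>"
    then have x: "x \<in> Aut" "x ` \<Delta> = \<Delta>" by (auto simp: Stab_def)
    have "finv x ` \<Delta> = finv x ` (x ` \<Delta>)" using x by simp
    also have "\<dots> = \<Delta>" by (rule image_inv_f_f) (use x in \<open>auto dest: Aut_D bij_is_inj\<close>)
    finally show "inv\<^bsub>AutG\<^esub> x \<in> Stab \<Delta>"
      using x by (simp add: AutG_inv Stab_def Aut_D)
  qed
qed



type_synonym 'n pt = "'n \<Rightarrow> complex"

lemma sep_fun:
  fixes F :: "('v \<Rightarrow> complex) set"
  assumes "finite F" "c \<notin> F"
  shows "\<exists>g. pf g \<and> (\<forall>f\<in>F. g f = 0) \<and> g c = 1"
proof -
  define l where "l f = (SOME l. c l \<noteq> f l)" for f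
  have l: "c (l f) \<noteq> f (l f)" if "f \<in> F" for f
  proof -
    from that assms have "c \<noteq> f" by auto
    then have "\<exists>l. c l \<noteq> f l" by (auto simp: fun_eq_iff)
    then show ?thesis unfolding l_def by (rule someI_ex)
  qed
  define g where "g x = (\<Prod>f\<in>F. (x (l f) - f (l f)) * inverse (c (l f) - f (l f)))" for x
  have "pf g" unfolding g_def[abs_def]
    by (rule pf_prod[OF assms(1)], rule pf_mult, rule pf_diff, rule pf_var, rule pf_const, rule pf_const)
  moreover have "\<forall>f\<in>F. g f = 0"
  proof
    fix f assume "f \<in> F"
    then show "g f = 0" unfolding g_def by (intro prod_zero[OF assms(1)]) (rule bexI[of _ f], auto)
  qed
  moreover have "g c = 1" unfolding g_def by (rule prod.neutral) (use l in simp)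
  ultimately show ?thesis by blast
qed

definition elem :: "'n \<Rightarrow> ('n pt \<Rightarrow> complex) \<Rightarrow> 'n pt \<Rightarrow> 'n pt" where
  "elem l h x = x(l := x l + h (x(l := 0)))"

lemma pf_upd0: "pf (\<lambda>x. (x(l := 0)) j)"
proof (cases "j = l")
  case True then show ?thesis using pf_const[of 0] by simp
next
  case False then show ?thesis using pf_var[of j] by simp
qed

lemma elem_poly: assumes "pf h" shows "is_poly_map (elem l h)"
  unfolding is_poly_map_iff
proof
  fix i
  show "pf (\<lambda>x. elem l h x i)"
  proof (cases "i = l")
    case True
    have "pf (\<lambda>x. h (\<lambda>j. (x(l := 0)) j))" by (rule pf_subst[OF assms pf_upd0])
    then have "pf (\<lambda>x. h (x(l := 0)))" by (simp only: eta_contract_eq)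
    then have "pf (\<lambda>x. x l + h (x(l := 0)))" by (intro pf_add pf_var) simp
    then show ?thesis using True by (simp add: elem_def)
  next
    case False then show ?thesis using pf_var[of i] by (simp add: elem_def)
  qed
qed

lemma elem_inv: "elem l (\<lambda>y. - h y) \<circ> elem l h = id"
  by (rule ext) (simp add: elem_def fun_eq_iff)

lemma elem_Aut: assumes "pf h" shows "elem l h \<in> Aut"
proof (rule Aut_I(1))
  show "is_poly_map (elem l h)" by (rule elem_poly[OF assms])
  have "pf (\<lambda>y. (-1) * h y)" by (rule pf_mult[OF pf_const assms])
  then show "is_poly_map (elem l (\<lambda>y. - h y))" using elem_poly by simp
  show "elem l (\<lambda>y. - h y) \<circ> elem l h = id" by (rule elem_inv)
  show "elem l h \<circ> elem l (\<lambda>y. - h y) = id" using elem_inv[of l "\<lambda>y. - h y"] by simp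
qed

lemma lemmaE:
  fixes F :: "('n::finite) pt set"
  assumes "finite F" "c(l := 0) \<notin> (\<lambda>f. f(l := 0)) ` F"
  shows "\<exists>\<psi>\<in>Aut. (\<forall>f\<in>F. \<psi> f = f) \<and> \<psi> c = c(l := t)"
proof -
  obtain g where g: "pf g" "\<forall>f\<in>(\<lambda>f. f(l := 0)) ` F. g f = 0" "g (c(l := 0)) = 1"
    using sep_fun[OF finite_imageI[OF assms(1)] assms(2)] by blast
  define h where "h y = (t - c l) * g y" for y
  have "pf h" unfolding h_def[abs_def] by (rule pf_mult[OF pf_const g(1)])
  then have "elem l h \<in> Aut" by (rule elem_Aut)
  moreover have "\<forall>f\<in>F. elem l h f = f" using g(2) by (auto simp: elem_def h_def)
  moreover have "elem l h c = c(l := t)" using g(3) by (simp add: elem_def h_def)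
  ultimately show ?thesis by blast
qed

definition lin :: "'n \<Rightarrow> ('n \<Rightarrow> complex) \<Rightarrow> 'n pt \<Rightarrow> 'n pt" where
  "lin j w x = (\<lambda>i. if i = j then x j else x i + x j * w i)"

lemma lin_poly: "is_poly_map (lin j w)"
  unfolding is_poly_map_iff
proof
  fix i
  show "pf (\<lambda>x. lin j w x i)"
  proof (cases "i = j")
    case True then show ?thesis using pf_var[of j] by (simp add: lin_def)
  next
    case False
    have "pf (\<lambda>x. x i + x j * w i)" by (rule pf_add[OF pf_var pf_mult[OF pf_var pf_const]])
    then show ?thesis using False by (simp add: lin_def)
  qed
qed

lemma lin_inv: "lin j (\<lambda>i. - w i) \<circ> lin j w = id"
  by (rule ext) (simp add: lin_def fun_eq_iff algebra_simps)

lemma lin_Aut: "lin j w \<in> Aut"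
proof (rule Aut_I(1)[OF lin_poly lin_poly])
  show "lin j w \<circ> lin j (\<lambda>i. - w i) = id" using lin_inv[of j "\<lambda>i. - w i"] by simp
  show "lin j (\<lambda>i. - w i) \<circ> lin j w = id" by (rule lin_inv)
qed

lemma step_lemma:
  fixes F :: "('n::finite) pt set"
  assumes "finite F" "\<forall>f\<in>F. f j = 0" "c \<notin> F" "e \<notin> F" "e j = 0"
  shows "\<exists>\<psi>\<in>Aut. (\<forall>f\<in>F. \<psi> f = f) \<and> \<psi> c = e"
proof -
  have imF: "(\<lambda>f. f(j := 0)) ` F = F"
  proof -
    have "(\<lambda>f. f(j := 0)) ` F = (\<lambda>f. f) ` F"
      by (rule image_cong[OF refl]) (use assms(2) in \<open>auto simp: fun_eq_iff\<close>)
    then show ?thesis by simp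
  qed
  obtain \<psi>1 where p1: "\<psi>1 \<in> Aut" "\<forall>f\<in>F. \<psi>1 f = f" "\<psi>1 c j \<noteq> 0"
  proof (cases "c j = 0")
    case True
    have "c(j := 0) = c" using True by (simp add: fun_eq_iff)
    then have "c(j := 0) \<notin> (\<lambda>f. f(j := 0)) ` F" using imF assms(3) by simp
    then obtain \<psi> where "\<psi> \<in> Aut" "\<forall>f\<in>F. \<psi> f = f" "\<psi> c = c(j := 1)"
      using lemmaE[OF assms(1)] by blast
    then show ?thesis using that[of \<psi>] by simp
  next
    case False
    then show ?thesis using that[of id] id_Aut by simp
  qed
  define c1 where "c1 = \<psi>1 c"
  define w where "w i = (e i - c1 i) / c1 j" for i
  have c1j: "c1 j \<noteq> 0" using p1(3) by (simp add: c1_def)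
  have l1: "lin j w c1 = e(j := c1 j)"
    using c1j by (simp add: lin_def w_def fun_eq_iff field_simps)
  have l2: "\<forall>f\<in>F. lin j w f = f" using assms(2) by (auto simp: lin_def fun_eq_iff)
  have "(e(j := c1 j))(j := 0) = e" using assms(5) by (simp add: fun_eq_iff)
  then have "(e(j := c1 j))(j := 0) \<notin> (\<lambda>f. f(j := 0)) ` F" using imF assms(4) by simp
  then obtain \<psi>3 where p3: "\<psi>3 \<in> Aut" "\<forall>f\<in>F. \<psi>3 f = f" "\<psi>3 (e(j := c1 j)) = (e(j := c1 j))(j := 0)"
    using lemmaE[OF assms(1)] by blast
  have "\<psi>3 \<circ> lin j w \<circ> \<psi>1 \<in> Aut" by (intro Aut_comp p1(1) p3(1) lin_Aut)
  moreover have "\<forall>f\<in>F. (\<psi>3 \<circ> lin j w \<circ> \<psi>1) f = f" using p1(2) p3(2) l2 by simp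
  moreover have "(\<psi>3 \<circ> lin j w \<circ> \<psi>1) c = e"
  proof -
    have "e(j := 0) = e" using assms(5) by (simp add: fun_eq_iff)
    then show ?thesis using p3(3) l1 by (simp add: c1_def[symmetric])
  qed
  ultimately show ?thesis by blast
qed

definition std :: "'n \<Rightarrow> nat \<Rightarrow> 'n pt" where
  "std i0 k = (\<lambda>l. if l = i0 then of_nat k else 0)"

lemma std_inj: "std i0 k = std i0 k' \<Longrightarrow> k = k'"
  unfolding std_def by (drule fun_cong[of _ _ i0]) simp

lemma normal_form:
  fixes i0 j :: "'n::finite"
  assumes "i0 \<noteq> j"
  shows "inj_on a {..<m} \<Longrightarrow> \<exists>\<psi>\<in>Aut. \<forall>k<m. \<psi> (a k) = std i0 k"
proof (induction m)
  case 0 then show ?case using id_Aut by blast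
next
  case (Suc m)
  then have "inj_on a {..<m}" using Suc.prems by (rule_tac inj_on_subset[OF Suc.prems]) auto
  then obtain \<psi> where \<psi>: "\<psi> \<in> Aut" "\<forall>k<m. \<psi> (a k) = std i0 k" using Suc.IH by blast
  define F where "F = std i0 ` {..<m}"
  have finF: "finite F" by (simp add: F_def)
  have Fj: "\<forall>f\<in>F. f j = 0" using assms by (auto simp: F_def std_def)
  have cF: "\<psi> (a m) \<notin> F"
  proof
    assume "\<psi> (a m) \<in> F"
    then obtain k where k: "k < m" "\<psi> (a m) = std i0 k" by (auto simp: F_def)
    then have "\<psi> (a m) = \<psi> (a k)" using \<psi> by simp
    then have "a m = a k" using \<psi>(1) by (auto dest!: Aut_D(1) bij_is_inj simp: inj_eq)
    moreover have "k \<in> {..<Suc m}" "m \<in> {..<Suc m}" using k by auto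
    ultimately show False using Suc.prems k(1) by (auto dest: inj_onD)
  qed
  have eF: "std i0 m \<notin> F" by (auto simp: F_def dest: std_inj)
  have ej: "std i0 m j = 0" using assms by (simp add: std_def)
  obtain \<phi> where \<phi>: "\<phi> \<in> Aut" "\<forall>f\<in>F. \<phi> f = f" "\<phi> (\<psi> (a m)) = std i0 m"
    using step_lemma[OF finF Fj cF eF ej] by blast
  have "\<phi> \<circ> \<psi> \<in> Aut" by (rule Aut_comp[OF \<phi>(1) \<psi>(1)])
  moreover have "\<forall>k<Suc m. (\<phi> \<circ> \<psi>) (a k) = std i0 k"
  proof (intro allI impI)
    fix k assume "k < Suc m"
    then consider "k < m" | "k = m" by linarith
    then show "(\<phi> \<circ> \<psi>) (a k) = std i0 k"
    proof cases
      case 1 then show ?thesis using \<psi>(2) \<phi>(2) by (simp add: F_def)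
    next
      case 2 then show ?thesis using \<phi>(3) by simp
    qed
  qed
  ultimately show ?case by blast
qed

lemma inf_trans:
  fixes A :: "('n::finite) pt set"
  assumes two: "card (UNIV :: 'n set) \<ge> 2" and "finite A" "inj_on \<sigma> A"
  shows "\<exists>\<phi>\<in>Aut. \<forall>x\<in>A. \<phi> x = \<sigma> x"
proof -
  obtain i0 j :: 'n where ij: "i0 \<noteq> j"
  proof -
    have "\<not> card (UNIV :: 'n set) \<le> 1" using two by simp
    then have "\<exists>i0 j :: 'n. i0 \<noteq> j" using card_le_Suc0_iff_eq[of "UNIV :: 'n set"] by auto
    then show ?thesis using that by blast
  qed
  obtain a where a: "bij_betw a {0..<card A} A" using ex_bij_betw_nat_finite[OF assms(2)] by blast
  have a': "bij_betw a {..<card A} A" using a by (simp add: atLeast0LessThan)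
  have ia: "inj_on a {..<card A}" using a' by (rule bij_betw_imp_inj_on)
  have ib: "inj_on (\<sigma> \<circ> a) {..<card A}"
    using comp_inj_on[OF ia] assms(3) a' by (simp add: bij_betw_def)
  obtain \<psi>a where pa: "\<psi>a \<in> Aut" "\<forall>k<card A. \<psi>a (a k) = std i0 k" using normal_form[OF ij ia] by blast
  obtain \<psi>b where pb: "\<psi>b \<in> Aut" "\<forall>k<card A. \<psi>b ((\<sigma> \<circ> a) k) = std i0 k" using normal_form[OF ij ib] by blast
  have "finv \<psi>b \<circ> \<psi>a \<in> Aut" by (intro Aut_comp Aut_D(4) pa(1) pb(1))
  moreover have "\<forall>x\<in>A. (finv \<psi>b \<circ> \<psi>a) x = \<sigma> x"
  proof
    fix x assume "x \<in> A"
    then obtain k where k: "k < card A" "x = a k" using a' by (auto simp: bij_betw_def)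
    have "(finv \<psi>b \<circ> \<psi>a) x = finv \<psi>b (\<psi>b (\<sigma> (a k)))" using pa(2) pb(2) k by simp
    also have "\<dots> = \<sigma> x" using k pb(1) by (simp add: inv_f_f bij_is_inj Aut_D(1))
    finally show "(finv \<psi>b \<circ> \<psi>a) x = \<sigma> x" .
  qed
  ultimately show ?thesis by blast
qed



lemma orbit_lemma:
  fixes \<Delta> :: "('n::finite) pt set"
  assumes two: "card (UNIV :: 'n set) \<ge> 2"
    and fin: "finite \<Delta>" "finite \<Gamma>" "finite \<Gamma>'"
    and c1: "card \<Gamma> = card \<Gamma>'" and c2: "card (\<Gamma> \<inter> \<Delta>) = card (\<Gamma>' \<inter> \<Delta>)"
  shows "\<exists>\<phi>\<in>Aut. \<phi> ` \<Delta> = \<Delta> \<and> \<phi> ` \<Gamma> = \<Gamma>'"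
proof -
  define P1 where "P1 = \<Delta> \<inter> \<Gamma>"
  define P2 where "P2 = \<Delta> - \<Gamma>"
  define P3 where "P3 = \<Gamma> - \<Delta>"
  define Q1 where "Q1 = \<Delta> \<inter> \<Gamma>'"
  define Q2 where "Q2 = \<Delta> - \<Gamma>'"
  define Q3 where "Q3 = \<Gamma>' - \<Delta>"
  have cP1: "card P1 = card Q1" using c2 by (simp add: P1_def Q1_def Int_commute)
  have "card \<Delta> = card P1 + card P2" unfolding P1_def P2_def by (rule card_Int_Diff[OF fin(1)])
  moreover have "card \<Delta> = card Q1 + card Q2" unfolding Q1_def Q2_def by (rule card_Int_Diff[OF fin(1)])
  ultimately have cP2: "card P2 = card Q2" using cP1 by simp
  have "card \<Gamma> = card P1 + card P3" unfolding P1_def P3_def using card_Int_Diff[OF fin(2), of \<Delta>]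
    by (simp add: Int_commute)
  moreover have "card \<Gamma>' = card Q1 + card Q3" unfolding Q1_def Q3_def using card_Int_Diff[OF fin(3), of \<Delta>]
    by (simp add: Int_commute)
  ultimately have cP3: "card P3 = card Q3" using cP1 c1 by simp
  obtain b1 where b1: "bij_betw b1 P1 Q1"
    using finite_same_card_bij[OF _ _ cP1] fin by (auto simp: P1_def Q1_def)
  obtain b2 where b2: "bij_betw b2 P2 Q2"
    using finite_same_card_bij[OF _ _ cP2] fin by (auto simp: P2_def Q2_def)
  obtain b3 where b3: "bij_betw b3 P3 Q3"
    using finite_same_card_bij[OF _ _ cP3] fin by (auto simp: P3_def Q3_def)
  define \<sigma> where "\<sigma> x = (if x \<in> P1 then b1 x else if x \<in> P2 then b2 x else b3 x)" for x
  have s1: "bij_betw \<sigma> P1 Q1" using b1 by (subst bij_betw_cong[of _ _ b1]) (auto simp: \<sigma>_def)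
  have s2: "bij_betw \<sigma> P2 Q2" using b2
    by (subst bij_betw_cong[of _ _ b2]) (auto simp: \<sigma>_def P1_def P2_def)
  have s3: "bij_betw \<sigma> P3 Q3" using b3
    by (subst bij_betw_cong[of _ _ b3]) (auto simp: \<sigma>_def P1_def P2_def P3_def)
  have s12: "bij_betw \<sigma> (P1 \<union> P2) (Q1 \<union> Q2)"
    by (rule bij_betw_combine[OF s1 s2]) (auto simp: Q1_def Q2_def)
  have s123: "bij_betw \<sigma> ((P1 \<union> P2) \<union> P3) ((Q1 \<union> Q2) \<union> Q3)"
    by (rule bij_betw_combine[OF s12 s3]) (auto simp: Q1_def Q2_def Q3_def)
  have finA: "finite ((P1 \<union> P2) \<union> P3)" using fin by (auto simp: P1_def P2_def P3_def)
  obtain \<phi> where \<phi>: "\<phi> \<in> Aut" "\<forall>x\<in>(P1 \<union> P2) \<union> P3. \<phi> x = \<sigma> x"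
    using inf_trans[OF two finA bij_betw_imp_inj_on[OF s123]] by blast
  have D: "\<Delta> = P1 \<union> P2" by (auto simp: P1_def P2_def)
  have G: "\<Gamma> = P1 \<union> P3" by (auto simp: P1_def P3_def)
  have "\<phi> ` \<Delta> = \<sigma> ` (P1 \<union> P2)" unfolding D by (rule image_cong) (use \<phi>(2) in auto)
  also have "\<dots> = Q1 \<union> Q2" using s12 by (simp add: bij_betw_def)
  also have "\<dots> = \<Delta>" by (auto simp: Q1_def Q2_def)
  finally have i1: "\<phi> ` \<Delta> = \<Delta>" .
  have "\<phi> ` \<Gamma> = \<sigma> ` P1 \<union> \<sigma> ` P3" unfolding G image_Un
    by (intro arg_cong2[where f="(\<union>)"] image_cong) (use \<phi>(2) in auto)
  also have "\<dots> = Q1 \<union> Q3" using s1 s3 by (simp add: bij_betw_def)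
  also have "\<dots> = \<Gamma>'" by (auto simp: Q1_def Q3_def)
  finally have i2: "\<phi> ` \<Gamma> = \<Gamma>'" .
  show ?thesis using \<phi>(1) i1 i2 by blast
qed

lemma subgroup_AutG_D:
  assumes "subgroup K (AutG :: (('n::finite) pt \<Rightarrow> 'n pt) monoid)"
  shows "K \<subseteq> Aut" "\<And>x y. x \<in> K \<Longrightarrow> y \<in> K \<Longrightarrow> x \<circ> y \<in> K" "id \<in> K"
proof -
  show "K \<subseteq> Aut" using subgroup.subset[OF assms] by (simp add: AutG_def)
  show "\<And>x y. x \<in> K \<Longrightarrow> y \<in> K \<Longrightarrow> x \<circ> y \<in> K" using subgroup.m_closed[OF assms] by (simp add: AutG_def)
  show "id \<in> K" using subgroup.one_closed[OF assms] by (simp add: AutG_def)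
qed

lemma infinite_pts: "infinite (UNIV :: ('n \<Rightarrow> complex) set)"
proof
  assume "finite (UNIV :: ('n \<Rightarrow> complex) set)"
  then have "finite (range (\<lambda>c::complex. (\<lambda>_::'n. c)))" by (rule finite_subset[rotated]) auto
  moreover have "inj (\<lambda>c::complex. (\<lambda>_::'n. c))" by (auto simp: inj_on_def fun_eq_iff)
  ultimately have "finite (UNIV :: complex set)" by (rule finite_imageD)
  then show False by (simp add: infinite_UNIV_char_0)
qed

lemma fresh_pt:
  assumes "finite (S :: ('n \<Rightarrow> complex) set)" obtains z where "z \<notin> S"
  using ex_new_if_finite[OF infinite_pts assms] by blast



lemma Aut_img_card:
  assumes "f \<in> Aut" shows "card (f ` A) = card A"
proof -
  have "inj f" using Aut_D(1)[OF assms] by (rule bij_is_inj)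
  then show ?thesis by (rule card_image[OF inj_on_subset[OF _ subset_UNIV]])
qed

lemma Aut_inv_img: "f \<in> Aut \<Longrightarrow> finv f ` (f ` A) = A"
  by (rule image_inv_f_f) (rule bij_is_inj[OF Aut_D(1)])

lemma Aut_img_inv: "f \<in> Aut \<Longrightarrow> f ` (finv f ` A) = A"
proof -
  assume "f \<in> Aut"
  then have "surj f" by (rule bij_is_surj[OF Aut_D(1)])
  then show ?thesis by (simp add: image_image surj_f_inv_f)
qed

lemma maximal_part:
  fixes \<Delta> :: "('n::finite) pt set"
  assumes two: "card (UNIV :: 'n set) \<ge> 2"
    and finD: "finite \<Delta>" and neD: "\<Delta> \<noteq> {}"
    and K: "subgroup K (AutG :: ('n pt \<Rightarrow> 'n pt) monoid)" and SK: "Stab \<Delta> \<subseteq> K"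
    and g: "g \<in> K" "g \<notin> Stab \<Delta>"
  shows "K = Aut"
proof -
  note KD = subgroup_AutG_D[OF K]
  define k where "k = card \<Delta>"
  define R where "R = {h ` \<Delta> | h. h \<in> K}"
  have RI: "h ` \<Delta> \<in> R" if "h \<in> K" for h using that by (auto simp: R_def)
  have RE: "\<exists>h\<in>K. \<Gamma> = h ` \<Delta>" if "\<Gamma> \<in> R" for \<Gamma> using that by (auto simp: R_def)
  have Rcard: "finite \<Gamma> \<and> card \<Gamma> = k" if GR: "\<Gamma> \<in> R" for \<Gamma>
  proof -
    obtain h where h: "h \<in> K" "\<Gamma> = h ` \<Delta>" using RE[OF GR] by blast
    then have "h \<in> Aut" using KD(1) by blast
    then show ?thesis using h finD by (simp add: Aut_img_card k_def)
  qed
  have step3: "\<Gamma>' \<in> R"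
    if G: "\<Gamma> \<in> R" and fG': "finite \<Gamma>'" and cG': "card \<Gamma>' = k" and S: "\<Sigma> \<in> R"
      and lv: "card (\<Sigma> \<inter> \<Delta>) = card (\<Gamma>' \<inter> \<Gamma>)" for \<Gamma> \<Gamma>' \<Sigma>
  proof -
    obtain h where h: "h \<in> K" "\<Gamma> = h ` \<Delta>" using RE[OF G] by blast
    obtain s where s: "s \<in> K" "\<Sigma> = s ` \<Delta>" using RE[OF S] by blast
    have hA: "h \<in> Aut" and sA: "s \<in> Aut" using h s KD(1) by auto
    have ih: "inj (finv h)" using hA by (auto dest: Aut_D(4) Aut_D(1) bij_is_inj)
    define \<Gamma>'' where "\<Gamma>'' = finv h ` \<Gamma>'"
    have fG'': "finite \<Gamma>''" using fG' by (simp add: \<Gamma>''_def)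
    have c1: "card \<Sigma> = card \<Gamma>''" using Rcard[OF S] cG' Aut_img_card[OF Aut_D(4)[OF hA], of \<Gamma>']
      by (simp add: \<Gamma>''_def)
    have "\<Gamma>'' \<inter> \<Delta> = finv h ` \<Gamma>' \<inter> finv h ` \<Gamma>"
      using Aut_inv_img[OF hA, of \<Delta>] h(2) by (simp add: \<Gamma>''_def)
    also have "\<dots> = finv h ` (\<Gamma>' \<inter> \<Gamma>)" by (rule image_Int[OF ih, symmetric])
    finally have "card (\<Gamma>'' \<inter> \<Delta>) = card (\<Gamma>' \<inter> \<Gamma>)"
      using card_image[OF inj_on_subset[OF ih subset_UNIV]] by simp
    then have c2: "card (\<Sigma> \<inter> \<Delta>) = card (\<Gamma>'' \<inter> \<Delta>)" using lv by simp
    have fS: "finite \<Sigma>" using Rcard[OF S] by simp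
    obtain \<phi> where \<phi>: "\<phi> \<in> Aut" "\<phi> ` \<Delta> = \<Delta>" "\<phi> ` \<Sigma> = \<Gamma>''"
      using orbit_lemma[OF two finD fS fG'' c1 c2] by blast
    have "\<phi> \<in> K" using \<phi> SK by (auto simp: Stab_def)
    then have "h \<circ> \<phi> \<circ> s \<in> K" using h s KD(2) by blast
    moreover have "(h \<circ> \<phi> \<circ> s) ` \<Delta> = \<Gamma>'"
    proof -
      have "(h \<circ> \<phi> \<circ> s) ` \<Delta> = h ` (\<phi> ` (s ` \<Delta>))" by (simp add: image_comp)
      also have "\<dots> = h ` \<Gamma>''" using \<phi>(3) s(2) by simp
      also have "\<dots> = \<Gamma>'" unfolding \<Gamma>''_def by (rule Aut_img_inv[OF hA])
      finally show ?thesis .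
    qed
    ultimately show ?thesis using RI by metis
  qed
  have gA: "g \<in> Aut" using g KD(1) by blast
  define \<Gamma>0 where "\<Gamma>0 = g ` \<Delta>"
  have G0R: "\<Gamma>0 \<in> R" using RI[OF g(1)] by (simp add: \<Gamma>0_def)
  have G0ne: "\<Gamma>0 \<noteq> \<Delta>" using g gA by (auto simp: Stab_def \<Gamma>0_def)
  obtain d where d: "d \<in> \<Delta>" "d \<notin> \<Gamma>0"
  proof -
    have "\<not> \<Delta> \<subseteq> \<Gamma>0"
    proof
      assume sub: "\<Delta> \<subseteq> \<Gamma>0"
      have "card \<Gamma>0 = k" "finite \<Gamma>0" using Rcard[OF G0R] by auto
      then have "\<Delta> = \<Gamma>0" using card_subset_eq[OF _ sub] by (simp add: k_def)
      then show False using G0ne by simp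
    qed
    then show ?thesis using that by blast
  qed
  have finG0: "finite \<Gamma>0" using Rcard[OF G0R] by simp
  obtain z where z: "z \<notin> \<Delta> \<union> \<Gamma>0" using fresh_pt[of "\<Delta> \<union> \<Gamma>0"] finD finG0 by blast
  define \<Sigma>2 where "\<Sigma>2 = insert z (\<Delta> - {d})"
  have kpos: "k \<ge> 1" using finD neD by (simp add: k_def Suc_le_eq card_gt_0_iff)
  have cS2: "card \<Sigma>2 = k" using z d finD kpos by (simp add: \<Sigma>2_def card_Diff_singleton k_def)
  have fS2: "finite \<Sigma>2" using finD by (simp add: \<Sigma>2_def)
  have "\<Sigma>2 \<inter> \<Gamma>0 = \<Gamma>0 \<inter> \<Delta>" using z d by (auto simp: \<Sigma>2_def)
  then have "card (\<Gamma>0 \<inter> \<Delta>) = card (\<Sigma>2 \<inter> \<Gamma>0)" by simp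
  then have S2R: "\<Sigma>2 \<in> R" by (rule step3[OF G0R fS2 cS2 G0R])
  have "\<Sigma>2 \<inter> \<Delta> = \<Delta> - {d}" using z by (auto simp: \<Sigma>2_def)
  then have lvS2: "card (\<Sigma>2 \<inter> \<Delta>) = k - 1" using d by (simp add: card_Diff_singleton k_def)
  have allR: "\<And>\<Gamma>. finite \<Gamma> \<Longrightarrow> card \<Gamma> = k \<Longrightarrow> card (\<Gamma> - \<Delta>) = t \<Longrightarrow> \<Gamma> \<in> R" for t
  proof (induction t)
    case 0
    then have "\<Gamma> \<subseteq> \<Delta>" by auto
    then have "\<Gamma> = \<Delta>" using card_subset_eq[OF finD] 0 by (simp add: k_def)
    then show ?case using RI[OF KD(3)] by simp
  next
    case (Suc t)
    have "\<Gamma> - \<Delta> \<noteq> {}" using Suc.prems(3) by (metis card.empty nat.distinct(1))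
    then obtain x where x: "x \<in> \<Gamma>" "x \<notin> \<Delta>" by blast
    obtain y where y: "y \<in> \<Delta>" "y \<notin> \<Gamma>"
    proof -
      have "\<not> \<Delta> \<subseteq> \<Gamma>"
      proof
        assume sub: "\<Delta> \<subseteq> \<Gamma>"
        then have "\<Delta> = \<Gamma>" using card_subset_eq[OF Suc.prems(1) sub] Suc.prems(2) by (simp add: k_def)
        then show False using x by simp
      qed
      then show ?thesis using that by blast
    qed
    define \<Gamma>' where "\<Gamma>' = insert y (\<Gamma> - {x})"
    have f': "finite \<Gamma>'" using Suc.prems(1) by (simp add: \<Gamma>'_def)
    have c': "card \<Gamma>' = k" using Suc.prems(1,2) x y kpos by (simp add: \<Gamma>'_def card_Diff_singleton)
    have "\<Gamma>' - \<Delta> = (\<Gamma> - \<Delta>) - {x}" using y by (auto simp: \<Gamma>'_def)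
    then have "card (\<Gamma>' - \<Delta>) = t" using Suc.prems(3) x by (simp add: card_Diff_singleton)
    then have G'R: "\<Gamma>' \<in> R" using Suc.IH f' c' by blast
    have "\<Gamma> \<inter> \<Gamma>' = \<Gamma> - {x}" using y x by (auto simp: \<Gamma>'_def)
    then have "card (\<Sigma>2 \<inter> \<Delta>) = card (\<Gamma> \<inter> \<Gamma>')" using lvS2 x Suc.prems(2) by (simp add: card_Diff_singleton)
    then show ?case by (rule step3[OF G'R Suc.prems(1,2) S2R])
  qed
  show "K = Aut"
  proof
    show "K \<subseteq> Aut" by (rule KD(1))
    show "Aut \<subseteq> K"
    proof
      fix f :: "'n pt \<Rightarrow> 'n pt" assume fA: "f \<in> Aut"
      have "f ` \<Delta> \<in> R" using allR[OF _ _ refl] finD Aut_img_card[OF fA] by (simp add: k_def)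
      then obtain h where h: "h \<in> K" "f ` \<Delta> = h ` \<Delta>" using RE by blast
      have hA: "h \<in> Aut" using h KD(1) by blast
      have "finv h \<circ> f \<in> Aut" by (rule Aut_comp[OF Aut_D(4)[OF hA] fA])
      moreover have "(finv h \<circ> f) ` \<Delta> = \<Delta>"
        unfolding image_comp[symmetric] h(2) by (rule Aut_inv_img[OF hA])
      ultimately have "finv h \<circ> f \<in> Stab \<Delta>" unfolding Stab_def by blast
      then have "finv h \<circ> f \<in> K" using SK by blast
      then have "h \<circ> (finv h \<circ> f) \<in> K" using KD(2) h(1) by blast
      moreover have "h \<circ> (finv h \<circ> f) = (h \<circ> finv h) \<circ> f" by (rule comp_assoc[symmetric])
      moreover have "(h \<circ> finv h) \<circ> f = f" unfolding Aut_D(5)[OF hA] by (rule id_comp)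
      ultimately show "f \<in> K" by metis
    qed
  qed
qed

lemma Stab_ne_Aut:
  fixes \<Delta> :: "('n::finite) pt set"
  assumes two: "card (UNIV :: 'n set) \<ge> 2" and finD: "finite \<Delta>" and neD: "\<Delta> \<noteq> {}"
  shows "Stab \<Delta> \<noteq> Aut"
proof
  assume eq: "Stab \<Delta> = Aut"
  obtain p where p: "p \<in> \<Delta>" using neD by blast
  obtain q where q: "q \<notin> \<Delta>" using fresh_pt[OF finD] by blast
  obtain \<phi> where \<phi>: "\<phi> \<in> Aut" "\<forall>x\<in>{p}. \<phi> x = q"
    using inf_trans[OF two, of "{p}" "\<lambda>_. q"] by auto
  then have "\<phi> \<in> Stab \<Delta>" using eq by simp
  then have "\<phi> p \<in> \<Delta>" using p by (auto simp: Stab_def)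
  then show False using \<phi>(2) q by simp
qed

lemma maximal:
  fixes \<Delta> :: "('n::finite) pt set"
  assumes two: "card (UNIV :: 'n set) \<ge> 2" and finD: "finite \<Delta>" and neD: "\<Delta> \<noteq> {}"
  shows "maximal_subgroup (Stab \<Delta>) (AutG :: ('n pt \<Rightarrow> 'n pt) monoid)"
  unfolding maximal_subgroup_def
proof (intro conjI allI impI)
  show "subgroup (Stab \<Delta>) (AutG :: ('n pt \<Rightarrow> 'n pt) monoid)" by (rule Stab_subgroup)
  show "Stab \<Delta> \<noteq> carrier (AutG :: ('n pt \<Rightarrow> 'n pt) monoid)"
    using Stab_ne_Aut[OF assms] by (simp add: AutG_def)
  fix K assume a: "subgroup K (AutG :: ('n pt \<Rightarrow> 'n pt) monoid) \<and> Stab \<Delta> \<subseteq> K"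
  show "K = Stab \<Delta> \<or> K = carrier (AutG :: ('n pt \<Rightarrow> 'n pt) monoid)"
  proof (cases "K = Stab \<Delta>")
    case True then show ?thesis by simp
  next
    case False
    then obtain g where "g \<in> K" "g \<notin> Stab \<Delta>" using a by blast
    then have "K = Aut" using maximal_part[OF assms] a by blast
    then show ?thesis by (simp add: AutG_def)
  qed
qed



definition Mset :: "nat \<Rightarrow> ('n \<Rightarrow>\<^sub>0 nat) set" where
  "Mset d = {m. mon_deg m \<le> d}"

lemma lookup_le_mon_deg: "Poly_Mapping.lookup m v \<le> mon_deg m"
proof (cases "v \<in> Poly_Mapping.keys m")
  case True
  show ?thesis unfolding mon_deg_def by (rule member_le_sum[OF True]) auto
next
  case False then show ?thesis by (simp add: in_keys_iff)
qed

lemma finite_Mset: "finite (Mset d :: (('n::finite) \<Rightarrow>\<^sub>0 nat) set)"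
proof -
  have fin: "finite {f :: 'n \<Rightarrow> nat. \<forall>x. (x \<in> UNIV \<longrightarrow> f x \<in> {..d}) \<and> (x \<notin> UNIV \<longrightarrow> f x = 0)}"
    by (rule finite_set_of_finite_funs) auto
  have "Poly_Mapping.lookup ` (Mset d :: ('n \<Rightarrow>\<^sub>0 nat) set) \<subseteq> {f :: 'n \<Rightarrow> nat. \<forall>x. (x \<in> UNIV \<longrightarrow> f x \<in> {..d}) \<and> (x \<notin> UNIV \<longrightarrow> f x = 0)}"
  proof
    fix f :: "'n \<Rightarrow> nat" assume "f \<in> Poly_Mapping.lookup ` Mset d"
    then obtain m where m: "mon_deg m \<le> d" "f = Poly_Mapping.lookup m" by (auto simp: Mset_def)
    then have "\<forall>x. f x \<le> d" using lookup_le_mon_deg[of m] le_trans by blast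
    then show "f \<in> {f :: 'n \<Rightarrow> nat. \<forall>x. (x \<in> UNIV \<longrightarrow> f x \<in> {..d}) \<and> (x \<notin> UNIV \<longrightarrow> f x = 0)}" by simp
  qed
  then have "finite (Poly_Mapping.lookup ` (Mset d :: ('n \<Rightarrow>\<^sub>0 nat) set))" by (rule finite_subset[OF _ fin])
  moreover have "inj_on Poly_Mapping.lookup (Mset d :: ('n \<Rightarrow>\<^sub>0 nat) set)" by (rule inj_onI) simp
  ultimately show ?thesis by (rule finite_imageD)
qed

definition Lf :: "nat \<Rightarrow> ('n::finite) pt \<Rightarrow> 'n \<Rightarrow> (('n \<times> ('n \<Rightarrow>\<^sub>0 nat)) \<Rightarrow> complex) \<Rightarrow> complex" where
  "Lf d p i y = (\<Sum>m\<in>Mset d. y (i, m) * mmono m p)"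

lemma Lf_eval:
  assumes "tdeg (F i) \<le> d"
  shows "Lf d p i (\<lambda>(i, m). Poly_Mapping.lookup (F i) m) = mpeval (F i) p"
proof -
  have ks: "Poly_Mapping.keys (F i) \<subseteq> Mset d"
  proof
    fix m assume m: "m \<in> Poly_Mapping.keys (F i)"
    have "mon_deg m \<le> tdeg (F i)" unfolding tdeg_def
      by (rule Max_ge) (use m in auto)
    then show "m \<in> Mset d" using assms by (simp add: Mset_def)
  qed
  have "mpeval (F i) p = (\<Sum>m\<in>Mset d. Poly_Mapping.lookup (F i) m * mmono m p)"
    unfolding mpeval_mono
    by (rule sum.mono_neutral_left[OF finite_Mset ks]) (auto simp: in_keys_iff)
  then show ?thesis by (simp add: Lf_def)
qed

lemma pf_Lf: "pf (Lf d p i)"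
  unfolding Lf_def[abs_def]
  by (rule pf_sum[OF finite_Mset], rule pf_mult, rule pf_var, rule pf_const)

lemma Q_exists:
  fixes \<Delta> :: "('n::finite) pt set"
  assumes "finite \<Delta>"
  shows "\<exists>q. \<forall>y. mpeval q y = (\<Prod>r\<in>\<Delta>. (Lf d p (\<sigma> r) y - r (\<sigma> r)))"
proof -
  have "pf (\<lambda>y. \<Prod>r\<in>\<Delta>. (Lf d p (\<sigma> r) y - r (\<sigma> r)))"
    by (rule pf_prod[OF assms], rule pf_diff, rule pf_Lf, rule pf_const)
  then have "is_mp (\<lambda>y. \<Prod>r\<in>\<Delta>. (Lf d p (\<sigma> r) y - r (\<sigma> r)))" by (rule pf_is_mp)
  then obtain q where "(\<lambda>y. \<Prod>r\<in>\<Delta>. (Lf d p (\<sigma> r) y - r (\<sigma> r))) = mpeval q" unfolding is_mp_def by blast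
  then have "\<forall>y. mpeval q y = (\<Prod>r\<in>\<Delta>. (Lf d p (\<sigma> r) y - r (\<sigma> r)))" by (simp add: fun_eq_iff)
  then show ?thesis by (rule exI)
qed

lemma closed_part:
  fixes \<Delta> :: "('n::finite) pt set"
  assumes finD: "finite \<Delta>"
  shows "ind_closed (Stab \<Delta>)"
  unfolding ind_closed_def
proof
  fix d
  define Q :: "('n \<times> ('n \<Rightarrow>\<^sub>0 nat)) cpoly set" where
    "Q = {q. \<exists>p\<in>\<Delta>. \<exists>\<sigma>. \<forall>y. mpeval q y = (\<Prod>r\<in>\<Delta>. (Lf d p (\<sigma> r) y - r (\<sigma> r)))}"
  have "Stab \<Delta> \<inter> Aut_le d = {f \<in> Aut_le d. \<exists>F. f = eval_map F \<and> (\<forall>i. tdeg (F i) \<le> d) \<and>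
        (\<forall>q\<in>Q. mpeval q (\<lambda>(i, m). Poly_Mapping.lookup (F i) m) = 0)}" (is "?L = ?R")
  proof
    show "?L \<subseteq> ?R"
    proof
      fix f assume f: "f \<in> ?L"
      then have fS: "f \<in> Stab \<Delta>" and fl: "f \<in> Aut_le d" by auto
      obtain F where F: "f = eval_map F" "\<forall>i. tdeg (F i) \<le> d" using fl by (auto simp: Aut_le_def)
      have "\<forall>q\<in>Q. mpeval q (\<lambda>(i, m). Poly_Mapping.lookup (F i) m) = 0"
      proof
        fix q assume "q \<in> Q"
        then obtain p \<sigma> where p: "p \<in> \<Delta>" and q: "\<forall>y. mpeval q y = (\<Prod>r\<in>\<Delta>. (Lf d p (\<sigma> r) y - r (\<sigma> r)))"
          unfolding Q_def by blast
        have r0: "f p \<in> \<Delta>" using fS p by (auto simp: Stab_def)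
        have "(\<Prod>r\<in>\<Delta>. (Lf d p (\<sigma> r) (\<lambda>(i, m). Poly_Mapping.lookup (F i) m) - r (\<sigma> r))) = 0"
        proof (rule prod_zero[OF finD], rule bexI[OF _ r0])
          have "Lf d p (\<sigma> (f p)) (\<lambda>(i, m). Poly_Mapping.lookup (F i) m) = mpeval (F (\<sigma> (f p))) p"
            using F(2) by (intro Lf_eval) auto
          also have "\<dots> = f p (\<sigma> (f p))" by (simp add: F(1) eval_map_def)
          finally show "Lf d p (\<sigma> (f p)) (\<lambda>(i, m). Poly_Mapping.lookup (F i) m) - f p (\<sigma> (f p)) = 0" by simp
        qed
        then show "mpeval q (\<lambda>(i, m). Poly_Mapping.lookup (F i) m) = 0" using q by simp
      qed
      then show "f \<in> ?R" using fl F by blast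
    qed
  next
    show "?R \<subseteq> ?L"
    proof
      fix f assume f: "f \<in> ?R"
      then have fl: "f \<in> Aut_le d" by blast
      from f obtain F where F: "f = eval_map F" "\<forall>i. tdeg (F i) \<le> d"
        "\<forall>q\<in>Q. mpeval q (\<lambda>(i, m). Poly_Mapping.lookup (F i) m) = 0" by blast
      have fA: "f \<in> Aut" using fl by (simp add: Aut_le_def)
      have sub: "f ` \<Delta> \<subseteq> \<Delta>"
      proof
        fix x assume "x \<in> f ` \<Delta>"
        then obtain p where p: "p \<in> \<Delta>" "x = f p" by blast
        show "x \<in> \<Delta>"
        proof (rule ccontr)
          assume nx: "x \<notin> \<Delta>"
          define \<sigma> where "\<sigma> r = (SOME i. f p i \<noteq> r i)" for r
          have s: "f p (\<sigma> r) \<noteq> r (\<sigma> r)" if "r \<in> \<Delta>" for r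
          proof -
            have "f p \<noteq> r" using nx p that by auto
            then have "\<exists>i. f p i \<noteq> r i" by (auto simp: fun_eq_iff)
            then show ?thesis unfolding \<sigma>_def by (rule someI_ex)
          qed
          obtain q where q: "\<forall>y. mpeval q y = (\<Prod>r\<in>\<Delta>. (Lf d p (\<sigma> r) y - r (\<sigma> r)))"
            using Q_exists[OF finD] by blast
          have "q \<in> Q" unfolding Q_def using p(1) q by blast
          then have "mpeval q (\<lambda>(i, m). Poly_Mapping.lookup (F i) m) = 0" using F(3) by blast
          then have "(\<Prod>r\<in>\<Delta>. (Lf d p (\<sigma> r) (\<lambda>(i, m). Poly_Mapping.lookup (F i) m) - r (\<sigma> r))) = 0"
            using q by simp
          then have "\<exists>r\<in>\<Delta>. Lf d p (\<sigma> r) (\<lambda>(i, m). Poly_Mapping.lookup (F i) m) - r (\<sigma> r) = 0"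
            by (subst (asm) prod_zero_iff[OF finD])
          then obtain r where r: "r \<in> \<Delta>" "Lf d p (\<sigma> r) (\<lambda>(i, m). Poly_Mapping.lookup (F i) m) - r (\<sigma> r) = 0"
            by (rule bexE)
          have "Lf d p (\<sigma> r) (\<lambda>(i, m). Poly_Mapping.lookup (F i) m) = mpeval (F (\<sigma> r)) p"
            by (rule Lf_eval) (use F(2) in blast)
          also have "\<dots> = f p (\<sigma> r)" unfolding F(1) eval_map_def by (rule refl)
          finally have "Lf d p (\<sigma> r) (\<lambda>(i, m). Poly_Mapping.lookup (F i) m) = f p (\<sigma> r)" .
          then show False using r s[OF r(1)] by simp
        qed
      qed
      have "card (f ` \<Delta>) = card \<Delta>"
        by (rule card_image[OF inj_on_subset[OF bij_is_inj[OF Aut_D(1)[OF fA]] subset_UNIV]])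
      then have "f ` \<Delta> = \<Delta>" using card_subset_eq[OF finD sub] by simp
      then show "f \<in> ?L" using fA fl by (simp add: Stab_def)
    qed
  qed
  then show "\<exists>Q :: ('n \<times> ('n \<Rightarrow>\<^sub>0 nat)) cpoly set. Stab \<Delta> \<inter> Aut_le d = {f \<in> Aut_le d. \<exists>F. f = eval_map F \<and> (\<forall>i. tdeg (F i) \<le> d) \<and>
        (\<forall>q\<in>Q. mpeval q (\<lambda>(i, m). Poly_Mapping.lookup (F i) m) = 0)}" by (rule exI[of _ Q])
qed


theorem proposition3p26:
  fixes \<Delta> :: "('n::finite \<Rightarrow> complex) set"
  assumes "card (UNIV :: 'n set) \<ge> 2"
    and "finite \<Delta>"
    and "\<Delta> \<noteq> {}"
  shows "maximal_subgroup (Stab \<Delta>) (AutG :: (('n \<Rightarrow> complex) \<Rightarrow> ('n \<Rightarrow> complex)) monoid)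
         \<and> ind_closed (Stab \<Delta>)"
  using maximal[OF assms] closed_part[OF assms(2)] by simp

end
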